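(* Let $G$ be a cubic graph. Suppose that for every vertex $x$ of $G$ there is a subgraph $H$ of $G$, all of whose vertices are far from $x$, with the following properties: (1) $H$ consists of two vertices $v,w$ together with three internally vertex-disjoint paths from $v$ to $w$; (2) each of these three paths has an even number of edges; (3) no two vertices of $H$ are joined by a short path in $G$ that uses no edge of $H$ (in particular $H$ is an induced subgraph); (4) each of the three paths is long. Then in the coloring game on $G$ with $3$ colors (A moving first), B has a winning strategy; consequently $\chi_g(G)=4$.
   Context: Coloring game: two players A and B alternately (A moves first) choose an uncolored vertex and assign it a color from $\{1,\dots,k\}$ keeping the partial coloring proper; A wins if all vertices get colored, B wins if some uncolored vertex has all $k$ colors among its neighbors; $\chi_g(G)$ is the least $k$ for which A has a winning strategy. Two vertices are close if they are joined by a path of length at most two (equivalently, their distance is at most 2); otherwise they are far apart. A path is short if some vertex on it is close to both of its endpoints; otherwise it is long. *)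

theory Defs
  imports Main
begin

definition simple_graph :: "'a set \<Rightarrow> ('a \<Rightarrow> 'a \<Rightarrow> bool) \<Rightarrow> bool" where
  "simple_graph V E \<longleftrightarrow> finite V \<and> (\<forall>u v. E u v \<longrightarrow> u \<in> V \<and> v \<in> V)
     \<and> (\<forall>u v. E u v \<longrightarrow> E v u) \<and> (\<forall>u. \<not> E u u)"

definition cubic :: "'a set \<Rightarrow> ('a \<Rightarrow> 'a \<Rightarrow> bool) \<Rightarrow> bool" where
  "cubic V E \<longleftrightarrow> (\<forall>v\<in>V. card {u. E v u} = 3)"

text \<open>A path is a nonempty list of distinct vertices, consecutive ones adjacent.
  Its length (number of edges) is length minus one.\<close>
definition gpath :: "'a set \<Rightarrow> ('a \<Rightarrow> 'a \<Rightarrow> bool) \<Rightarrow> 'a list \<Rightarrow> bool" where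
  "gpath V E P \<longleftrightarrow> P \<noteq> [] \<and> distinct P \<and> set P \<subseteq> V
     \<and> (\<forall>i. Suc i < length P \<longrightarrow> E (P ! i) (P ! Suc i))"

definition path_edges :: "'a list \<Rightarrow> 'a set set" where
  "path_edges P = {{P ! i, P ! Suc i} | i. Suc i < length P}"

definition close :: "('a \<Rightarrow> 'a \<Rightarrow> bool) \<Rightarrow> 'a \<Rightarrow> 'a \<Rightarrow> bool" where
  "close E u v \<longleftrightarrow> u = v \<or> E u v \<or> (\<exists>z. E u z \<and> E z v)"

definition far :: "('a \<Rightarrow> 'a \<Rightarrow> bool) \<Rightarrow> 'a \<Rightarrow> 'a \<Rightarrow> bool" where
  "far E u v \<longleftrightarrow> \<not> close E u v"

definition short_path :: "('a \<Rightarrow> 'a \<Rightarrow> bool) \<Rightarrow> 'a list \<Rightarrow> bool" where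
  "short_path E P \<longleftrightarrow> (\<exists>z\<in>set P. close E (hd P) z \<and> close E (last P) z)"

definition long_path :: "('a \<Rightarrow> 'a \<Rightarrow> bool) \<Rightarrow> 'a list \<Rightarrow> bool" where
  "long_path E P \<longleftrightarrow> \<not> short_path E P"

definition good_theta ::
  "'a set \<Rightarrow> ('a \<Rightarrow> 'a \<Rightarrow> bool) \<Rightarrow> 'a \<Rightarrow> 'a \<Rightarrow> 'a list \<Rightarrow> 'a list \<Rightarrow> 'a list \<Rightarrow> bool" where
  "good_theta V E v w P1 P2 P3 \<longleftrightarrow>
     (let Ps = [P1, P2, P3];
          VH = set P1 \<union> set P2 \<union> set P3;
          EH = path_edges P1 \<union> path_edges P2 \<union> path_edges P3 in
     \<comment> \<open>(1) two vertices and three internally vertex-disjoint v-w paths\<close>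
     v \<noteq> w
     \<and> (\<forall>P\<in>set Ps. gpath V E P \<and> hd P = v \<and> last P = w)
     \<and> set P1 \<inter> set P2 = {v, w} \<and> set P1 \<inter> set P3 = {v, w} \<and> set P2 \<inter> set P3 = {v, w}
     \<comment> \<open>(2) each path has an even number of edges\<close>
     \<and> (\<forall>P\<in>set Ps. even (length P - 1))
     \<comment> \<open>(3) no two vertices of H are joined by a short path avoiding the edges of H\<close>
     \<and> (\<forall>Q. gpath V E Q \<and> hd Q \<in> VH \<and> last Q \<in> VH \<and> hd Q \<noteq> last Q
            \<and> path_edges Q \<inter> EH = {} \<longrightarrow> \<not> short_path E Q)
     \<comment> \<open>(4) each of the three paths is long\<close>
     \<and> (\<forall>P\<in>set Ps. long_path E P))"

text \<open>Positions are partial colorings c :: 'a \<Rightarrow> nat option (None = uncolored);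
  colors are 1..k.\<close>
definition legal_move ::
  "'a set \<Rightarrow> ('a \<Rightarrow> 'a \<Rightarrow> bool) \<Rightarrow> nat \<Rightarrow> ('a \<Rightarrow> nat option) \<Rightarrow> ('a \<Rightarrow> nat option) \<Rightarrow> bool" where
  "legal_move V E k c c' \<longleftrightarrow> (\<exists>v i. v \<in> V \<and> c v = None \<and> i \<in> {1..k}
      \<and> (\<forall>u. E v u \<longrightarrow> c u \<noteq> Some i) \<and> c' = c(v := Some i))"

definition all_colored :: "'a set \<Rightarrow> ('a \<Rightarrow> nat option) \<Rightarrow> bool" where
  "all_colored V c \<longleftrightarrow> (\<forall>v\<in>V. c v \<noteq> None)"

definition blocked :: "'a set \<Rightarrow> ('a \<Rightarrow> 'a \<Rightarrow> bool) \<Rightarrow> nat \<Rightarrow> ('a \<Rightarrow> nat option) \<Rightarrow> bool" where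
  "blocked V E k c \<longleftrightarrow> (\<exists>v\<in>V. c v = None \<and> (\<forall>i\<in>{1..k}. \<exists>u. E v u \<and> c u = Some i))"

text \<open>A_wins_A / A_wins_B: A has a winning strategy from position c with A / B to move.\<close>
inductive A_wins_A and A_wins_B ::
  "'a set \<Rightarrow> ('a \<Rightarrow> 'a \<Rightarrow> bool) \<Rightarrow> nat \<Rightarrow> ('a \<Rightarrow> nat option) \<Rightarrow> bool"
  for V E k where
  AA_done: "all_colored V c \<Longrightarrow> A_wins_A V E k c"
| AB_done: "all_colored V c \<Longrightarrow> A_wins_B V E k c"
| AA_move: "\<not> blocked V E k c \<Longrightarrow> legal_move V E k c c' \<Longrightarrow> A_wins_B V E k c' \<Longrightarrow> A_wins_A V E k c"
| AB_move: "\<not> blocked V E k c \<Longrightarrow> (\<And>c'. legal_move V E k c c' \<Longrightarrow> A_wins_A V E k c')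
            \<Longrightarrow> A_wins_B V E k c"

text \<open>B_wins_A / B_wins_B: B has a winning strategy from position c with A / B to move.\<close>
inductive B_wins_A and B_wins_B ::
  "'a set \<Rightarrow> ('a \<Rightarrow> 'a \<Rightarrow> bool) \<Rightarrow> nat \<Rightarrow> ('a \<Rightarrow> nat option) \<Rightarrow> bool"
  for V E k where
  BA_done: "blocked V E k c \<Longrightarrow> B_wins_A V E k c"
| BB_done: "blocked V E k c \<Longrightarrow> B_wins_B V E k c"
| BA_move: "\<not> all_colored V c \<Longrightarrow> (\<And>c'. legal_move V E k c c' \<Longrightarrow> B_wins_B V E k c')
            \<Longrightarrow> B_wins_A V E k c"
| BB_move: "legal_move V E k c c' \<Longrightarrow> B_wins_A V E k c' \<Longrightarrow> B_wins_B V E k c"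

definition game_chromatic_number :: "'a set \<Rightarrow> ('a \<Rightarrow> 'a \<Rightarrow> bool) \<Rightarrow> nat" where
  "game_chromatic_number V E = (LEAST k. A_wins_A V E k (\<lambda>_. None))"

end

theory Submission
  imports Defs
begin

lemma all_nat_split: "(\<forall>i::nat. P i) = (P 0 \<and> (\<forall>i. P (Suc i)))"
  by (metis not0_implies_Suc)

lemma gpath_single: "gpath V E [x] \<longleftrightarrow> x \<in> V"
  by (simp add: gpath_def)

lemma gpath_Cons2: "gpath V E (x # y # xs) \<longleftrightarrow> x \<in> V \<and> x \<notin> set (y#xs) \<and> E x y \<and> gpath V E (y # xs)"
  unfolding gpath_def
  apply (subst all_nat_split)
  apply auto
  done

lemma path_edges_single: "path_edges [x] = {}"
  by (simp add: path_edges_def)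

lemma ex_nat_split: "(\<exists>i::nat. P i) = (P 0 \<or> (\<exists>i. P (Suc i)))"
  by (metis not0_implies_Suc)

lemma path_edges_Cons2: "path_edges (x # y # xs) = insert {x,y} (path_edges (y#xs))"
  unfolding path_edges_def
  apply (rule set_eqI)
  apply (simp only: mem_Collect_eq insert_iff)
  apply (subst ex_nat_split)
  apply simp
  done

definition Sset :: "('a \<Rightarrow> 'a \<Rightarrow> bool) \<Rightarrow> 'a \<Rightarrow> 'a \<Rightarrow> 'a set" where
  "Sset E p q = insert p (insert q {z. E q z})"

definition segok where
  "segok V E c P f (\<alpha>::nat) (\<beta>::nat) k \<longleftrightarrow>
    length P = 2*k+1 \<and> k \<ge> 1 \<and> set P \<subseteq> V \<and> (\<forall>i. Suc i < length P \<longrightarrow> E (P!i) (P!Suc i)) \<and>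
    c (P!0) = Some \<alpha> \<and> c (P!(2*k)) = Some \<beta> \<and> \<alpha> \<in> {1..3} \<and> \<beta> \<in> {1..3} \<and>
    (\<forall>i. 0<i \<and> i<2*k \<longrightarrow> E (P!i) (f i) \<and> f i \<in> V \<and> (\<forall>t\<in>Sset E (P!i) (f i). c t = None)
         \<and> (\<forall>u. E (P!i) u \<longrightarrow> u = P!(i-1) \<or> u = P!Suc i \<or> u = f i)) \<and>
    (\<forall>i j. 0<i \<and> i<2*k \<and> 0<j \<and> j<2*k \<and> i\<noteq>j \<longrightarrow> Sset E (P!i) (f i) \<inter> Sset E (P!j) (f j) = {})"

lemma exec_threat:
  assumes "u \<in> V" "c u = None" "E u a" "c a = Some \<alpha>" "E u b" "c b = Some \<beta>" "E u t" "t \<in> V"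
    "c t = None" "\<forall>z. E t z \<longrightarrow> c z = None" "\<alpha> \<in> {1..3}" "\<beta>\<in>{1..3}" "\<alpha>\<noteq>\<beta>" "u \<noteq> t"
  shows "B_wins_B V E 3 c"
proof -
  define \<delta> where "\<delta> = 6 - \<alpha> - \<beta>"
  have a1: "1 \<le> \<alpha>" "\<alpha> \<le> 3" "1 \<le> \<beta>" "\<beta> \<le> 3" using assms(11,12) by auto
  have d: "\<delta> \<in> {1..3}" "\<delta>\<noteq>\<alpha>" "\<delta>\<noteq>\<beta>" using a1 assms(13) unfolding \<delta>_def atLeastAtMost_iff by arith+
  let ?c = "c(t := Some \<delta>)"
  have lm: "legal_move V E 3 c ?c" unfolding legal_move_def
    using d assms by (intro exI[of _ t] exI[of _ \<delta>]) auto
  have at: "a \<noteq> t" "b \<noteq> t" using assms by auto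
  have bl: "blocked V E 3 ?c" unfolding blocked_def
  proof (intro bexI[of _ u] conjI ballI)
    show "?c u = None" using assms by auto
    fix i :: nat assume i: "i \<in> {1..3}"
    have "i = \<alpha> \<or> i = \<beta> \<or> i = \<delta>" using i d assms(11-13) by auto
    then show "\<exists>w. E u w \<and> ?c w = Some i" using assms at by auto
  qed (rule assms)
  show ?thesis by (rule BB_move[OF lm BA_done[OF bl]])
qed

lemma seg_win:
  assumes sym: "\<forall>x y. E x y \<longrightarrow> E y x" and irr: "\<forall>x. \<not> E x x"
  shows "segok V E c P f \<alpha> \<beta> k \<Longrightarrow> (k \<ge> 2 \<or> \<alpha> \<noteq> \<beta>) \<Longrightarrow> B_wins_B V E 3 c"
proof (induction k arbitrary: c P f \<alpha> rule: less_induct)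
  case (less k)
  define S where "S i = Sset E (P!i) (f i)" for i
  have len: "length P = 2*k+1" and k1: "k \<ge> 1" and PV: "set P \<subseteq> V"
    and ed: "\<And>i. Suc i < length P \<Longrightarrow> E (P!i) (P!Suc i)"
    and c0: "c (P!0) = Some \<alpha>" and cn: "c (P!(2*k)) = Some \<beta>" and ab: "\<alpha> \<in> {1..3}" "\<beta> \<in> {1..3}"
    and int: "\<And>i. 0<i \<Longrightarrow> i<2*k \<Longrightarrow> E (P!i) (f i) \<and> f i \<in> V \<and> (\<forall>t\<in>S i. c t = None)
         \<and> (\<forall>u. E (P!i) u \<longrightarrow> u = P!(i-1) \<or> u = P!Suc i \<or> u = f i)"
    and dis: "\<And>i j. 0<i \<Longrightarrow> i<2*k \<Longrightarrow> 0<j \<Longrightarrow> j<2*k \<Longrightarrow> i\<noteq>j \<Longrightarrow> S i \<inter> S j = {}"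
    using less.prems(1) unfolding segok_def S_def by blast+
  have PiV: "\<And>i. i < length P \<Longrightarrow> P!i \<in> V" using PV by auto
  have inS: "\<And>i. P!i \<in> S i" "\<And>i. f i \<in> S i" "\<And>i z. E (f i) z \<Longrightarrow> z \<in> S i"
    by (auto simp: S_def Sset_def)
  have c1n: "c (P!1) = None" using int[of 1] k1 inS by auto
  have S1: "\<forall>t\<in>S 1. c t = None" using int[of 1] k1 by auto
  show ?case
  proof (cases "k = 1")
    case True
    then have "\<alpha> \<noteq> \<beta>" using less.prems(2) by auto
    show ?thesis
    proof (rule exec_threat[where u="P!1" and a="P!0" and b="P!2" and t="f 1" and \<alpha>=\<alpha> and \<beta>=\<beta>])
      show "P!1 \<in> V" using PiV[of 1] len k1 by auto
      show "E (P ! 1) (P ! 0)" using ed[of 0] len sym k1 by auto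
      show "E (P ! 1) (P ! 2)" using ed[of 1] len True by (auto simp: numeral_2_eq_2)
      show "c (P!2) = Some \<beta>" using cn True by simp
      show "E (P ! 1) (f 1)" "f 1 \<in> V" using int[of 1] True by auto
      show "c (f 1) = None" "\<forall>z. E (f 1) z \<longrightarrow> c z = None" using S1 inS by auto
      show "P ! 1 \<noteq> f 1" using int[of 1] True irr by auto
    qed (use c1n c0 ab \<open>\<alpha> \<noteq> \<beta>\<close> in auto)
  next
    case False
    then have k2: "k \<ge> 2" using k1 by auto
    obtain \<gamma> :: nat where g: "\<gamma> \<in> {1..3}" "\<gamma> \<noteq> \<alpha>" "\<gamma> \<noteq> \<beta>"
      using ab by (intro that[of "if \<alpha> \<noteq> 1 \<and> \<beta> \<noteq> 1 then 1 else if \<alpha> \<noteq> 2 \<and> \<beta> \<noteq> 2 then 2 else 3"]) auto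
    have Sc: "\<And>i t. 0<i \<Longrightarrow> i<2*k \<Longrightarrow> t \<in> S i \<Longrightarrow> c t = None" using int by blast
    have c2n: "c (P!2) = None" using Sc[of 2] k2 inS by auto
    define c1 where "c1 = c(P!2 := Some \<gamma>)"
    have c3n: "c (P!3) = None" using Sc[of 3 "P!3"] k2 inS(1)[of 3] by auto
    have cf2: "c (f 2) = None" using Sc[of 2 "f 2"] k2 inS(2)[of 2] by auto
    have n2: "\<And>u. E (P!2) u \<Longrightarrow> u = P!1 \<or> u = P!3 \<or> u = f 2"
    proof -
      fix u assume "E (P!2) u"
      then have "u = P!(2-1) \<or> u = P!Suc 2 \<or> u = f 2" using int[of 2] k2 by auto
      then show "u = P!1 \<or> u = P!3 \<or> u = f 2" by simp
    qed
    have P2V: "P!2 \<in> V" using PiV[of 2] len k2 by auto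
    have lm: "legal_move V E 3 c c1" unfolding legal_move_def c1_def
      apply (rule exI[of _ "P!2"], rule exI[of _ \<gamma>])
      using P2V c2n g n2 c1n c3n cf2 by fastforce
    have S12: "S 1 \<inter> S 2 = {}" using dis[of 1 2] k2 by auto
    have d12: "P!1 \<noteq> P!2" "f 1 \<noteq> P!2" using S12 inS(1)[of 1] inS(1)[of 2] inS(2)[of 1] by (metis disjoint_iff)+
    have d02: "P!0 \<noteq> P!2" "P!(2*k) \<noteq> P!2" using c0 cn c2n by auto
    have "B_wins_A V E 3 c1"
    proof (rule BA_move)
      show "\<not> all_colored V c1" unfolding all_colored_def c1_def
        using d12 c1n PiV[of 1] len k1 by auto
      fix c2 assume "legal_move V E 3 c1 c2"
      then obtain y i where y: "y \<in> V" "c1 y = None" "c2 = c1(y := Some i)"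
        unfolding legal_move_def by blast
      have yne: "y \<noteq> P!0" "y \<noteq> P!2" "y \<noteq> P!(2*k)" using y c0 cn d02 by (auto simp: c1_def)
      show "B_wins_B V E 3 c2"
      proof (cases "y \<in> S 1")
        case False
        show ?thesis
        proof (rule exec_threat[where u="P!1" and a="P!0" and b="P!2" and t="f 1" and \<alpha>=\<alpha> and \<beta>=\<gamma>])
          show "P!1 \<in> V" using PiV[of 1] len k1 by auto
          show "E (P ! 1) (P ! 0)" using ed[of 0] len sym k1 by auto
          show "E (P ! 1) (P ! 2)" using ed[of 1] len k2 by (auto simp: numeral_2_eq_2)
          show "c2 (P!2) = Some \<gamma>" using y yne by (simp add: c1_def)
          show "c2 (P!0) = Some \<alpha>" using y yne d02 c0 by (simp add: c1_def)
          show "E (P ! 1) (f 1)" "f 1 \<in> V" using int[of 1] k2 by auto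
          show "c2 (f 1) = None" using S1 inS(2)[of 1] False y d12 by (auto simp: c1_def)
          show "\<forall>z. E (f 1) z \<longrightarrow> c2 z = None"
          proof (intro allI impI)
            fix z assume "E (f 1) z"
            then have "z \<in> S 1" by (simp add: S_def Sset_def)
            then show "c2 z = None" using S1 False y S12 inS(1)[of 2] by (auto simp: c1_def)
          qed
          show "c2 (P!1) = None" using S1 inS(1)[of 1] False y d12 by (auto simp: c1_def)
          show "P ! 1 \<noteq> f 1" using int[of 1] k2 irr by auto
        qed (use ab g in auto)
      next
        case True
        define P' where "P' = drop 2 P"
        define g' where "g' i = f (i+2)" for i
        have P'n: "\<And>i. P'!i = P!(i+2)" using len k2 by (simp add: P'_def add.commute)
        have lenP': "length P' = 2*(k-1)+1" using len k2 by (simp add: P'_def)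
        have ySj: "\<And>j. 1<j \<Longrightarrow> j<2*k \<Longrightarrow> y \<notin> S j"
        proof -
          fix j assume "1<j" "j<2*k"
          then have "S 1 \<inter> S j = {}" using dis[of 1 j] k2 by auto
          then show "y \<notin> S j" using True by auto
        qed
        have "segok V E c2 P' g' \<gamma> \<beta> (k-1)"
          unfolding segok_def
        proof (intro conjI allI impI)
          show "length P' = 2*(k-1)+1" by (rule lenP')
          show "1 \<le> k-1" using k2 by auto
          show "set P' \<subseteq> V" using PV by (auto simp: P'_def dest: in_set_dropD)
          fix i assume "Suc i < length P'" then show "E (P'!i) (P'!Suc i)"
            using ed[of "i+2"] lenP' len P'n by auto
        next
          have P'0: "P'!0 = P!2" unfolding P'_def using len k2 by simp
          have "Suc (Suc (2 * (k - Suc 0))) = 2*k" using k2 by simp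
          then have P'e: "P'!(2*(k-1)) = P!(2*k)" unfolding P'_def using len k2 by (simp add: nth_drop)
          show "c2 (P'!0) = Some \<gamma>" unfolding P'0 using y yne by (simp add: c1_def)
          show "c2 (P'!(2*(k-1))) = Some \<beta>" unfolding P'e using y yne cn d02 by (simp add: c1_def)
          show "\<gamma> \<in> {1..3}" "\<beta> \<in> {1..3}" using g ab by auto
        next
          fix i assume i: "0<i \<and> i<2*(k-1)"
          then have j: "0 < i+2" "i+2 < 2*k" "i+2 \<noteq> 2" "1 < i+2" by auto
          have e: "i+2-1 = (i-1)+2" "Suc (i+2) = Suc i + 2" using i by auto
          show "E (P'!i) (g' i)" "g' i \<in> V" using int[OF j(1,2)] by (auto simp only: P'n g'_def)
          have "\<forall>u. E (P'!i) u \<longrightarrow> u = P'!(i-1) \<or> u = P'!Suc i \<or> u = g' i"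
            using int[OF j(1,2)] unfolding P'n g'_def e by simp
          then show "\<And>u. E (P'!i) u \<Longrightarrow> u = P'!(i-1) \<or> u = P'!Suc i \<or> u = g' i" by blast
          have "S (i+2) \<inter> S 2 = {}" using dis[of "i+2" 2] j k2 by auto
          then show "\<forall>t\<in>Sset E (P'!i) (g' i). c2 t = None"
            using Sc[OF j(1,2)] ySj[OF j(4,2)] inS(1)[of 2] y
            unfolding P'n g'_def by (auto simp: S_def c1_def)
        next
          fix i j assume h: "0<i \<and> i<2*(k-1) \<and> 0<j \<and> j<2*(k-1) \<and> i\<noteq>j"
          then have "0 < i+2" "i+2 < 2*k" "0<j+2" "j+2<2*k" "i+2 \<noteq> j+2" by auto
          then have "S (i+2) \<inter> S (j+2) = {}" by (rule dis)
          then show "Sset E (P'!i) (g' i) \<inter> Sset E (P'!j) (g' j) = {}"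
            unfolding P'n g'_def S_def .
        qed
        moreover have "k-1 < k" using k2 by auto
        ultimately show ?thesis using less.IH[of "k-1" c2 P' g' \<gamma>] g by auto
      qed
    qed
    then show ?thesis by (rule BB_move[OF lm])
  qed
qed


lemma sg_sym: "simple_graph V E \<Longrightarrow> E u v \<Longrightarrow> E v u" by (simp add: simple_graph_def)
lemma sg_irr: "simple_graph V E \<Longrightarrow> \<not> E u u" by (simp add: simple_graph_def)
lemma sg_V: "simple_graph V E \<Longrightarrow> E u v \<Longrightarrow> u \<in> V \<and> v \<in> V" by (simp add: simple_graph_def)

lemma path_edges_sub: "e \<in> path_edges P \<Longrightarrow> e \<subseteq> set P"
  by (auto simp: path_edges_def)

locale th =
  fixes V :: "'a set" and E v w P1 P2 P3
  assumes sg: "simple_graph V E" and cub: "cubic V E" and gt: "good_theta V E v w P1 P2 P3"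
begin

definition "VH = set P1 \<union> set P2 \<union> set P3"
definition "EH = path_edges P1 \<union> path_edges P2 \<union> path_edges P3"

lemma vw: "v \<noteq> w" using gt by (simp add: good_theta_def Let_def)

lemma pth: "P \<in> {P1,P2,P3} \<Longrightarrow> gpath V E P \<and> hd P = v \<and> last P = w \<and> even (length P - 1) \<and> long_path E P"
  using gt by (auto simp: good_theta_def Let_def)

lemma ints: "set P1 \<inter> set P2 = {v,w}" "set P1 \<inter> set P3 = {v,w}" "set P2 \<inter> set P3 = {v,w}"
  using gt by (auto simp: good_theta_def Let_def)

lemma cond3: "gpath V E Q \<Longrightarrow> hd Q \<in> VH \<Longrightarrow> last Q \<in> VH \<Longrightarrow> hd Q \<noteq> last Q \<Longrightarrow> path_edges Q \<inter> EH = {}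
   \<Longrightarrow> \<not> short_path E Q"
  using gt unfolding good_theta_def Let_def VH_def EH_def by blast

lemma EH_sub: "e \<in> EH \<Longrightarrow> e \<subseteq> VH"
  unfolding EH_def VH_def using path_edges_sub by blast

lemma Qcontra:
  assumes "gpath V E Q" "hd Q \<in> VH" "last Q \<in> VH" "hd Q \<noteq> last Q" "\<forall>e\<in>path_edges Q. \<not> e \<subseteq> VH"
    "z \<in> set Q" "close E (hd Q) z" "close E (last Q) z"
  shows False
proof -
  have "path_edges Q \<inter> EH = {}" using assms(5) EH_sub by blast
  moreover have "short_path E Q" using assms(6-8) unfolding short_path_def by blast
  ultimately show False using cond3 assms(1-4) by blast
qed

lemma symE: "E a b \<Longrightarrow> E b a" using sg_sym[OF sg] .
lemma irrE: "\<not> E a a" using sg_irr[OF sg] .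
lemma VE: "E a b \<Longrightarrow> a \<in> V" "E a b \<Longrightarrow> b \<in> V" using sg_V[OF sg] by auto

lemma N_o:
  assumes "a \<in> VH" "E a oo" "oo \<notin> VH" "E oo z" "z \<in> VH"
  shows "z = a"
proof (rule ccontr)
  assume az: "z \<noteq> a"
  show False
  proof (rule Qcontra[of "[a,oo,z]" oo])
    show "gpath V E [a, oo, z]" using assms az VE irrE
      by (auto simp: gpath_Cons2 gpath_single)
    show "\<forall>e\<in>path_edges [a, oo, z]. \<not> e \<subseteq> VH" using assms
      by (simp add: path_edges_Cons2 path_edges_single)
    show "close E (last [a, oo, z]) oo" using assms symE by (simp add: close_def)
  qed (use assms az in \<open>auto simp: close_def\<close>)
qed

lemma S_disj:
  assumes a: "a \<in> VH" "E a oa" "oa \<notin> VH" and b: "b \<in> VH" "E b ob" "ob \<notin> VH" and ab: "a \<noteq> b"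
  shows "Sset E a oa \<inter> Sset E b ob = {}"
proof (rule ccontr)
  assume "Sset E a oa \<inter> Sset E b ob \<noteq> {}"
  then obtain t where ta: "t \<in> Sset E a oa" and tb: "t \<in> Sset E b ob" by blast
  have SVa: "\<And>t. t \<in> Sset E a oa \<Longrightarrow> t \<in> VH \<Longrightarrow> t = a"
    using N_o[OF a] a(3) by (auto simp: Sset_def)
  have SVb: "\<And>t. t \<in> Sset E b ob \<Longrightarrow> t \<in> VH \<Longrightarrow> t = b"
    using N_o[OF b] b(3) by (auto simp: Sset_def)
  have tV: "t \<notin> VH" using SVa[OF ta] SVb[OF tb] ab by auto
  have c1: "oa = ob \<Longrightarrow> False"
  proof -
    assume e: "oa = ob"
    show False
    proof (rule Qcontra[of "[a,oa,b]" oa])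
      show "gpath V E [a, oa, b]" using a b ab e VE irrE symE
        by (auto simp: gpath_Cons2 gpath_single)
      show "\<forall>e\<in>path_edges [a, oa, b]. \<not> e \<subseteq> VH" using a
        by (simp add: path_edges_Cons2 path_edges_single)
      show "close E (last [a, oa, b]) oa" using b e by (simp add: close_def)
    qed (use a b ab in \<open>auto simp: close_def\<close>)
  qed
  have c2: "E oa ob \<Longrightarrow> False"
  proof -
    assume e: "E oa ob"
    show False
    proof (rule Qcontra[of "[a,oa,ob,b]" oa])
      show "gpath V E [a, oa, ob, b]" using a b ab e VE irrE symE
        by (auto simp: gpath_Cons2 gpath_single)
      show "\<forall>e\<in>path_edges [a, oa, ob, b]. \<not> e \<subseteq> VH" using a b
        by (simp add: path_edges_Cons2 path_edges_single)
      show "close E (last [a, oa, ob, b]) oa" using b e symE by (auto simp: close_def)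
    qed (use a b ab in \<open>auto simp: close_def\<close>)
  qed
  have c3: "E oa t \<Longrightarrow> E ob t \<Longrightarrow> oa \<noteq> ob \<Longrightarrow> False"
  proof -
    assume e: "E oa t" "E ob t" "oa \<noteq> ob"
    show False
    proof (rule Qcontra[of "[a,oa,t,ob,b]" t])
      show "gpath V E [a, oa, t, ob, b]" using a b ab e tV VE irrE symE
        by (auto simp: gpath_Cons2 gpath_single)
      show "\<forall>e\<in>path_edges [a, oa, t, ob, b]. \<not> e \<subseteq> VH" using a b
        by (simp add: path_edges_Cons2 path_edges_single)
      show "close E (last [a, oa, t, ob, b]) t" using b e symE by (auto simp: close_def)
      show "close E (hd [a, oa, t, ob, b]) t" using a e symE by (auto simp: close_def)
    qed (use a b ab in \<open>auto\<close>)
  qed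
  have "t = oa \<or> E oa t" "t = ob \<or> E ob t" using ta tb tV a b by (auto simp: Sset_def)
  then show False using c1 c2 c3 symE by metis
qed

lemma interior_unique:
  assumes "P \<in> {P1,P2,P3}" "P' \<in> {P1,P2,P3}" "a \<in> set P" "a \<in> set P'" "a \<noteq> v" "a \<noteq> w"
  shows "P = P'"
  using assms ints by (auto simp: Int_commute)

lemma pidx:
  assumes P: "P \<in> {P1,P2,P3}"
  shows "P \<noteq> []" "distinct P" "set P \<subseteq> V" "\<And>i. Suc i < length P \<Longrightarrow> E (P!i) (P!Suc i)"
    "P!0 = v" "P!(length P - 1) = w"
  using pth[OF P] by (auto simp: gpath_def hd_conv_nth last_conv_nth)

lemma P_VH: "P \<in> {P1,P2,P3} \<Longrightarrow> set P \<subseteq> VH" by (auto simp: VH_def)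

lemma int_nvw:
  assumes P: "P \<in> {P1,P2,P3}" and i: "0 < i" "i < length P - 1"
  shows "P!i \<noteq> v" "P!i \<noteq> w"
proof -
  have d: "distinct P" using pidx[OF P] by auto
  have il: "i < length P" "0 < length P" "length P - 1 < length P" using i by auto
  have "P!i \<noteq> P!0" "P!i \<noteq> P!(length P - 1)" using i d il by (simp_all add: nth_eq_iff_index_eq)
  then show "P!i \<noteq> v" "P!i \<noteq> w" using pidx[OF P] by auto
qed

lemma H_nbr:
  assumes P: "P \<in> {P1,P2,P3}" and i: "0 < i" "i < length P - 1" and u: "E (P!i) u" "u \<in> VH"
  shows "u = P!(i-1) \<or> u = P!Suc i"
proof -
  have a: "P!i \<in> VH" using P_VH[OF P] i by auto
  have "{P!i, u} \<in> EH"
  proof (rule ccontr)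
    assume ne: "{P!i, u} \<notin> EH"
    have g: "gpath V E [P!i, u]" using u VE irrE by (auto simp: gpath_Cons2 gpath_single)
    have "path_edges [P!i, u] \<inter> EH = {}" using ne by (simp add: path_edges_Cons2 path_edges_single)
    moreover have "short_path E [P!i, u]" unfolding short_path_def close_def using u by auto
    ultimately show False using cond3[OF g] a u irrE by auto
  qed
  then obtain P' m where P': "P' \<in> {P1,P2,P3}" and m: "Suc m < length P'" "{P!i, u} = {P'!m, P'!Suc m}"
    unfolding EH_def path_edges_def by blast
  have "P!i \<in> {P'!m, P'!Suc m}" using m(2) by (metis insertI1)
  then have "P!i \<in> set P'" using m(1) by auto
  then have PP: "P' = P" using interior_unique[OF P' P] int_nvw[OF P i] i by auto
  have d: "distinct P" using pidx[OF P] by auto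
  have il: "i < length P" using i by auto
  from m PP have "(P!i = P!m \<and> u = P!Suc m) \<or> (P!i = P!Suc m \<and> u = P!m)" by (auto simp: doubleton_eq_iff)
  then show ?thesis
  proof
    assume h: "P!i = P!m \<and> u = P!Suc m"
    then have "i = m" using d il m PP by (simp add: nth_eq_iff_index_eq)
    then show ?thesis using h by auto
  next
    assume h: "P!i = P!Suc m \<and> u = P!m"
    then have "i = Suc m" using d il m PP by (simp add: nth_eq_iff_index_eq)
    then show ?thesis using h by auto
  qed
qed

definition gg :: "'a \<Rightarrow> 'a" where "gg a = (SOME u. E a u \<and> u \<notin> VH)"

lemma g_props:
  assumes P: "P \<in> {P1,P2,P3}" and i: "0 < i" "i < length P - 1"
  shows "E (P!i) (gg (P!i))" "gg (P!i) \<notin> VH"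
    "\<And>u. E (P!i) u \<Longrightarrow> u = P!(i-1) \<or> u = P!Suc i \<or> u = gg (P!i)"
proof -
  let ?a = "P!i" and ?N = "{u. E (P!i) u}"
  have aV: "?a \<in> V" using pidx(3)[OF P] i by auto
  have cN: "card ?N = 3" using cub aV by (simp add: cubic_def)
  then have fN: "finite ?N" by (metis card.infinite zero_neq_numeral)
  have d: "distinct P" using pidx[OF P] by auto
  have e1: "E ?a (P!(i-1))" using pidx(4)[OF P, of "i-1"] i symE by auto
  have e2: "E ?a (P!Suc i)" using pidx(4)[OF P, of i] i by auto
  have ne: "P!(i-1) \<noteq> P!Suc i" using d i by (simp add: nth_eq_iff_index_eq)
  have VH2: "P!(i-1) \<in> VH" "P!Suc i \<in> VH" using P_VH[OF P] i by auto
  have ex: "\<exists>u. E ?a u \<and> u \<notin> VH"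
  proof (rule ccontr)
    assume "\<not> ?thesis"
    then have "?N \<subseteq> {P!(i-1), P!Suc i}" using H_nbr[OF P i] by auto
    then have "card ?N \<le> 2" by (metis card_2_iff card_mono finite.emptyI finite.insertI ne)
    then show False using cN by simp
  qed
  then show g1: "E ?a (gg ?a)" "gg ?a \<notin> VH" unfolding gg_def by (metis (mono_tags, lifting) someI_ex)+
  fix u assume eu: "E ?a u"
  show "u = P!(i-1) \<or> u = P!Suc i \<or> u = gg ?a"
  proof (rule ccontr)
    assume nu: "\<not> ?thesis"
    then have uV: "u \<notin> VH" using H_nbr[OF P i eu] by auto
    have "{P!(i-1), P!Suc i, gg ?a, u} \<subseteq> ?N" using e1 e2 g1 eu by auto
    moreover have "P!(i-1) \<noteq> gg ?a" "P!(i-1) \<noteq> u" "P!Suc i \<noteq> gg ?a" "P!Suc i \<noteq> u" "gg ?a \<noteq> u"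
      using VH2 g1 uV nu by auto
    then have "card {P!(i-1), P!Suc i, gg ?a, u} = 4" using ne by simp
    ultimately have "4 \<le> card ?N" by (metis card_mono fN)
    then show False using cN by simp
  qed
qed

definition SS :: "'a \<Rightarrow> 'a set" where "SS a = Sset E a (gg a)"

lemma SS_disj:
  assumes P: "P \<in> {P1,P2,P3}" and i: "0 < i" "i < length P - 1"
    and P': "P' \<in> {P1,P2,P3}" and j: "0 < j" "j < length P' - 1"
    and ne: "P!i \<noteq> P'!j"
  shows "SS (P!i) \<inter> SS (P'!j) = {}"
  unfolding SS_def
  by (rule S_disj) (use P_VH[OF P] P_VH[OF P'] i j g_props[OF P i] g_props[OF P' j] ne in auto)

lemma SS_VH: 
  assumes P: "P \<in> {P1,P2,P3}" and i: "0 < i" "i < length P - 1" and t: "t \<in> SS (P!i)" "t \<in> VH"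
  shows "t = P!i"
proof -
  have a: "P!i \<in> VH" using P_VH[OF P] i by auto
  show ?thesis using t N_o[OF a g_props(1,2)[OF P i], of t] g_props(2)[OF P i] by (auto simp: SS_def Sset_def)
qed

lemma SS_far:
  assumes "t \<in> SS a" "E a (gg a)" shows "close E t a"
proof -
  have "t = a \<or> t = gg a \<or> E (gg a) t" using assms(1) by (auto simp: SS_def Sset_def)
  then show ?thesis using assms(2) symE unfolding close_def by blast
qed

lemma len4:
  assumes P: "P \<in> {P1,P2,P3}"
  shows "4 \<le> length P - 1" "even (length P - 1)"
proof -
  have ev: "even (length P - 1)" using pth[OF P] by auto
  then show "even (length P - 1)" .
  have ne: "P \<noteq> []" using pidx[OF P] by auto
  have n0: "length P - 1 \<noteq> 0"
  proof
    assume "length P - 1 = 0"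
    then show False using pidx(5,6)[OF P] vw by simp
  qed
  have n2: "length P - 1 \<noteq> 2"
  proof
    assume l: "length P - 1 = 2"
    have l3: "length P = 3" using l by auto
    have e: "E (P!0) (P!1)" "E (P!1) (P!2)" using pidx(4)[OF P, of 0] pidx(4)[OF P, of 1] l3 by (auto simp: numeral_2_eq_2)
    have "short_path E P" unfolding short_path_def
    proof (rule bexI[of _ "P!1"])
      have "hd P = P!0" "last P = P!2" using ne l by (auto simp: hd_conv_nth last_conv_nth)
      then show "close E (hd P) (P!1) \<and> close E (last P) (P!1)" using e symE by (auto simp: close_def)
      show "P!1 \<in> set P" using l by auto
    qed
    then show False using pth[OF P] by (auto simp: long_path_def)
  qed
  show "4 \<le> length P - 1" using ev n0 n2 by presburger
qed

lemma seg_of_path: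
  assumes P: "P \<in> {P1,P2,P3}" and cv: "c v = Some (\<alpha>::nat)" and cw: "c w = Some \<beta>"
    and ab: "\<alpha> \<in> {1..3}" "\<beta> \<in> {1..3}"
    and clean: "\<And>i t. 0<i \<Longrightarrow> i<length P - 1 \<Longrightarrow> t \<in> SS (P!i) \<Longrightarrow> c t = None"
  shows "B_wins_B V E 3 c"
proof -
  define k where "k = (length P - 1) div 2"
  have l4: "4 \<le> length P - 1" "even (length P - 1)" using len4[OF P] by auto
  have lk2: "2*k = length P - 1" unfolding k_def using l4(2) by simp
  have lk: "length P = 2*k+1" "2*k = length P - 1" using lk2 l4(1) by linarith+
  have k2: "k \<ge> 2" using l4(1) lk2 by linarith
  have "segok V E c P (\<lambda>i. gg (P!i)) \<alpha> \<beta> k"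
    unfolding segok_def
  proof (intro conjI allI impI)
    show "length P = 2*k+1" "1 \<le> k" using lk(1) k2 by auto
    show "set P \<subseteq> V" by (rule pidx(3)[OF P])
    show "\<And>i. Suc i < length P \<Longrightarrow> E (P!i) (P!Suc i)" by (rule pidx(4)[OF P])
    show "c (P!0) = Some \<alpha>" using pidx(5)[OF P] cv by simp
    show "c (P!(2*k)) = Some \<beta>" using pidx(6)[OF P] cw lk2 by simp
    show "\<alpha> \<in> {1..3}" "\<beta> \<in> {1..3}" using ab by auto
  next
    fix i assume i: "0 < i \<and> i < 2*k"
    then have i': "0 < i" "i < length P - 1" using lk2 by auto
    show "E (P!i) (gg (P!i))" using g_props[OF P i'] by auto
    then show "gg (P!i) \<in> V" by (rule VE(2))
    show "\<forall>t\<in>Sset E (P!i) (gg (P!i)). c t = None" using clean[OF i'] by (auto simp: SS_def)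
    show "\<And>u. E (P!i) u \<Longrightarrow> u = P!(i-1) \<or> u = P!Suc i \<or> u = gg (P!i)" using g_props(3)[OF P i'] by blast
  next
    fix i j assume h: "0 < i \<and> i < 2*k \<and> 0 < j \<and> j < 2*k \<and> i \<noteq> j"
    then have i': "0 < i" "i < length P - 1" "0 < j" "j < length P - 1" using lk2 by auto
    have "P!i \<noteq> P!j" using pidx(2)[OF P] h i' by (simp add: nth_eq_iff_index_eq)
    then have "SS (P!i) \<inter> SS (P!j) = {}" using SS_disj[OF P i'(1,2) P i'(3,4)] by blast
    then show "Sset E (P!i) (gg (P!i)) \<inter> Sset E (P!j) (gg (P!j)) = {}" by (simp add: SS_def)
  qed
  moreover have sy: "\<forall>a b. E a b \<longrightarrow> E b a" using symE by blast
  moreover have ir: "\<forall>a. \<not> E a a" using irrE by blast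
  ultimately show ?thesis using seg_win[of E V c P "\<lambda>i. gg (P!i)" \<alpha> \<beta> k] k2 by blast
qed

definition bad :: "'a list \<Rightarrow> 'a \<Rightarrow> bool" where
  "bad P y \<longleftrightarrow> (\<exists>i. 0 < i \<and> i < length P - 1 \<and> y \<in> SS (P!i))"

lemma bad_cross:
  assumes P: "P \<in> {P1,P2,P3}" and P': "P' \<in> {P1,P2,P3}" and I: "set P \<inter> set P' = {v,w}"
    and b: "bad P y" "bad P' y"
  shows False
proof -
  obtain i j where i: "0 < i" "i < length P - 1" "y \<in> SS (P!i)"
    and j: "0 < j" "j < length P' - 1" "y \<in> SS (P'!j)" using b unfolding bad_def by blast
  have mem: "P!i \<in> set P" "P'!j \<in> set P'" using i(2) j(2) by (simp_all add: nth_mem)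
  have "P!i \<noteq> P'!j"
  proof
    assume e: "P!i = P'!j"
    then have "P!i \<in> set P \<inter> set P'" using mem by simp
    then have "P!i \<in> {v,w}" using I by simp
    then show False using int_nvw[OF P i(1,2)] by simp
  qed
  then have "SS (P!i) \<inter> SS (P'!j) = {}" by (rule SS_disj[OF P i(1,2) P' j(1,2)])
  then show False using i(3) j(3) by (metis disjoint_iff)
qed

lemma fin:
  assumes farx: "\<forall>y\<in>VH. far E x y" and cv: "c v = Some (\<alpha>::nat)" and cw: "c w = Some \<beta>"
    and ab: "\<alpha> \<in> {1..3}" "\<beta> \<in> {1..3}"
    and col: "\<And>t. c t \<noteq> None \<Longrightarrow> t = x \<or> t = v \<or> t = w \<or> t = y1 \<or> t = y2"
  shows "B_wins_B V E 3 c"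
proof -
  have I: "set P1 \<inter> set P2 = {v,w}" "set P1 \<inter> set P3 = {v,w}" "set P2 \<inter> set P3 = {v,w}" by (simp_all add: ints)
  have m: "P1 \<in> {P1,P2,P3}" "P2 \<in> {P1,P2,P3}" "P3 \<in> {P1,P2,P3}" by auto
  have nb: "\<And>y. \<not> (bad P1 y \<and> bad P2 y)" "\<And>y. \<not> (bad P1 y \<and> bad P3 y)" "\<And>y. \<not> (bad P2 y \<and> bad P3 y)"
    using bad_cross[OF m(1) m(2) I(1)] bad_cross[OF m(1) m(3) I(2)] bad_cross[OF m(2) m(3) I(3)] by blast+
  obtain P where P: "P \<in> {P1,P2,P3}" and nby: "\<not> bad P y1" "\<not> bad P y2"
  proof (cases "\<not> bad P1 y1 \<and> \<not> bad P1 y2")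
    case True then show ?thesis using that[OF m(1)] by blast
  next
    case False
    show ?thesis
    proof (cases "\<not> bad P2 y1 \<and> \<not> bad P2 y2")
      case True then show ?thesis using that[OF m(2)] by blast
    next
      case False2: False
      have "\<not> bad P3 y1 \<and> \<not> bad P3 y2" using False False2 nb by blast
      then show ?thesis using that[OF m(3)] by blast
    qed
  qed
  show ?thesis
  proof (rule seg_of_path[OF P cv cw ab])
    fix i t assume i: "0 < i" "i < length P - 1" and t: "t \<in> SS (P!i)"
    show "c t = None"
    proof (rule ccontr)
      assume "c t \<noteq> None"
      then have "t = x \<or> t = v \<or> t = w \<or> t = y1 \<or> t = y2" by (rule col)
      moreover have "t \<noteq> x"
      proof
        assume "t = x"
        then have "close E x (P!i)" using SS_far[OF t g_props(1)[OF P i]] by simp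
        moreover have "P!i \<in> VH" using P_VH[OF P] i by auto
        ultimately show False using farx by (auto simp: far_def)
      qed
      moreover have "t \<noteq> v" "t \<noteq> w"
      proof -
        have "v \<in> set P1" "w \<in> set P1" using pth[OF m(1)] pidx(1)[OF m(1)] hd_in_set last_in_set by metis+
        then have "v \<in> VH" "w \<in> VH" by (simp_all add: VH_def)
        then show "t \<noteq> v" "t \<noteq> w" using SS_VH[OF P i t] int_nvw[OF P i] by auto
      qed
      moreover have "t \<noteq> y1" "t \<noteq> y2" using nby i t unfolding bad_def by blast+
      ultimately show False by blast
    qed
  qed
qed

end

lemma blocked_nc: "blocked V E k c \<Longrightarrow> \<not> all_colored V c"
  by (auto simp: blocked_def all_colored_def)

lemma legal_nc: "legal_move V E k c c' \<Longrightarrow> \<not> all_colored V c"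
  by (auto simp: legal_move_def all_colored_def)

lemma excl: "A_wins_A V E k c \<Longrightarrow> \<not> B_wins_A V E k c" "A_wins_B V E k c \<Longrightarrow> \<not> B_wins_B V E k c"
proof (induction rule: A_wins_A_A_wins_B.inducts)
  case (AA_done c)
  then show ?case by (auto elim: B_wins_A.cases dest: blocked_nc)
next
  case (AB_done c)
  then show ?case by (auto elim: B_wins_B.cases dest: blocked_nc legal_nc)
next
  case (AA_move c c')
  then show ?case by (auto elim: B_wins_A.cases)
next
  case (AB_move c)
  then show ?case by (auto elim: B_wins_B.cases)
qed

lemma cub_nbrs:
  assumes "cubic V E" "v \<in> V" shows "card {u. E v u} = 3" "finite {u. E v u}"
proof -
  show c: "card {u. E v u} = 3" using assms by (simp add: cubic_def)
  then show "finite {u. E v u}" by (metis card.infinite zero_neq_numeral)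
qed

lemma free4:
  assumes cub: "cubic V E" and v: "v \<in> V"
  shows "\<exists>i\<in>{1..4::nat}. \<forall>u. E v u \<longrightarrow> c u \<noteq> Some i"
proof (rule ccontr)
  assume "\<not> ?thesis"
  then have "\<forall>i\<in>{1..4::nat}. \<exists>u. E v u \<and> c u = Some i" by auto
  then obtain f where f: "\<forall>i\<in>{1..4::nat}. E v (f i) \<and> c (f i) = Some i" by metis
  have "inj_on f {1..4}" unfolding inj_on_def using f by (metis option.inject)
  moreover have "f ` {1..4} \<subseteq> {u. E v u}" using f by auto
  ultimately have "card {1..4::nat} \<le> card {u. E v u}"
    using card_inj_on_le cub_nbrs[OF cub v] by metis
  then show False using cub_nbrs[OF cub v] by simp
qed

lemma notblocked4: "cubic V E \<Longrightarrow> \<not> blocked V E 4 c"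
  unfolding blocked_def using free4 by (metis option.distinct(1))

lemma A4:
  assumes sg: "simple_graph V E" and cub: "cubic V E"
  shows "card {v\<in>V. c v = None} = m \<Longrightarrow> A_wins_A V E 4 c \<and> A_wins_B V E 4 c"
proof (induction m arbitrary: c)
  have fV: "finite V" using sg by (simp add: simple_graph_def)
  case 0
  then have "all_colored V c" using fV by (auto simp: all_colored_def)
  then show ?case by (auto intro: AA_done AB_done)
next
  have fV: "finite V" using sg by (simp add: simple_graph_def)
  case (Suc m)
  have upd: "\<And>y j. y \<in> V \<Longrightarrow> c y = None \<Longrightarrow> card {v\<in>V. (c(y := Some j)) v = None} = m"
  proof -
    fix y j assume y: "y \<in> V" "c y = None"
    have "{v\<in>V. (c(y := Some j)) v = None} = {v\<in>V. c v = None} - {y}" by auto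
    moreover have "finite {v\<in>V. c v = None}" using fV by auto
    ultimately show "card {v\<in>V. (c(y := Some j)) v = None} = m" using Suc.prems y by simp
  qed
  have "{v\<in>V. c v = None} \<noteq> {}"
  proof
    assume h: "{v\<in>V. c v = None} = {}" show False using Suc.prems unfolding h by simp
  qed
  then obtain y where y: "y \<in> V" "c y = None" by auto
  obtain i where i: "i \<in> {1..4::nat}" "\<forall>u. E y u \<longrightarrow> c u \<noteq> Some i" using free4[OF cub y(1)] by blast
  have lm: "legal_move V E 4 c (c(y := Some i))" unfolding legal_move_def using y i by blast
  have nb: "\<not> blocked V E 4 c" using notblocked4[OF cub] .
  have "A_wins_A V E 4 c"
    using AA_move[OF nb lm] Suc.IH[OF upd[OF y]] by blast
  moreover have "A_wins_B V E 4 c"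
  proof (rule AB_move[OF nb])
    fix c' assume "legal_move V E 4 c c'"
    then obtain y' j where "y' \<in> V" "c y' = None" "c' = c(y' := Some j)" unfolding legal_move_def by blast
    then show "A_wins_A V E 4 c'" using Suc.IH[OF upd] by blast
  qed
  ultimately show ?case by blast
qed

lemma B0:
  assumes "V \<noteq> {}" shows "B_wins_A V E 0 (\<lambda>_. None)"
  using assms by (intro BA_done) (auto simp: blocked_def)

lemma nbr_exists:
  assumes cub: "cubic V E" and v: "v \<in> V" and "finite X" "card X < 3"
  shows "\<exists>u. E v u \<and> u \<notin> X"
proof (rule ccontr)
  assume "\<not> ?thesis"
  then have "{u. E v u} \<subseteq> X" by auto
  then have "card {u. E v u} \<le> card X" using assms(3) card_mono by blast
  then show False using cub_nbrs[OF cub v] assms(4) by simp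
qed

lemma B1:
  assumes sg: "simple_graph V E" and cub: "cubic V E" and V: "V \<noteq> {}"
  shows "B_wins_A V E 1 (\<lambda>_. None)"
proof (rule BA_move)
  show "\<not> all_colored V (\<lambda>_. None)" using V by (auto simp: all_colored_def)
  fix c1 assume "legal_move V E 1 (\<lambda>_. None) c1"
  then obtain x i where x: "x \<in> V" "i \<in> {1..1::nat}" "c1 = (\<lambda>_. None)(x := Some i)"
    unfolding legal_move_def by blast
  obtain u where u: "E x u" using nbr_exists[OF cub x(1), of "{}"] by auto
  have "u \<noteq> x" using u sg_irr[OF sg] by auto
  moreover have "u \<in> V" using sg_V[OF sg u] by auto
  moreover have "E u x" using sg_sym[OF sg u] .
  ultimately have "blocked V E 1 c1" unfolding blocked_def using x by auto
  then show "B_wins_B V E 1 c1" by (rule BB_done)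
qed

lemma B2:
  assumes sg: "simple_graph V E" and cub: "cubic V E" and V: "V \<noteq> {}"
  shows "B_wins_A V E 2 (\<lambda>_. None)"
proof (rule BA_move)
  show "\<not> all_colored V (\<lambda>_. None)" using V by (auto simp: all_colored_def)
  fix c1 assume "legal_move V E 2 (\<lambda>_. None) c1"
  then obtain x i where x: "x \<in> V" "i \<in> {1..2::nat}" "c1 = (\<lambda>_. None)(x := Some i)"
    unfolding legal_move_def by blast
  obtain u where u: "E x u" using nbr_exists[OF cub x(1), of "{}"] by auto
  have uV: "u \<in> V" using sg_V[OF sg u] by auto
  obtain t where t: "E u t" "t \<noteq> x" using nbr_exists[OF cub uV, of "{x}"] by auto
  have tV: "t \<in> V" using sg_V[OF sg t(1)] by auto
  have ux: "u \<noteq> x" "u \<noteq> t" using u t sg_irr[OF sg] by auto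
  define c2 where "c2 = c1(t := Some (3 - i))"
  have lm: "legal_move V E 2 c1 c2" unfolding legal_move_def c2_def
    using x t tV by (intro exI[of _ t] exI[of _ "3-i"]) (auto; presburger)
  have "blocked V E 2 c2" unfolding blocked_def
  proof (intro bexI[of _ u] conjI ballI)
    show "c2 u = None" using x ux by (simp add: c2_def)
    fix j :: nat assume j: "j \<in> {1..2}"
    have "j = i \<or> j = 3 - i" using j x(2) by auto
    then show "\<exists>z. E u z \<and> c2 z = Some j"
      using sg_sym[OF sg u] t x by (auto simp: c2_def)
  qed (rule uV)
  then show "B_wins_B V E 2 c1" by (rule BB_move[OF lm BA_done])
qed

lemma B3:
  fixes V :: "'a set" and E :: "'a \<Rightarrow> 'a \<Rightarrow> bool"
  assumes sg: "simple_graph V E" and cub: "cubic V E" and Vne: "V \<noteq> {}"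
    and H: "\<forall>x\<in>V. \<exists>v w P1 P2 P3. good_theta V E v w P1 P2 P3
            \<and> (\<forall>y \<in> set P1 \<union> set P2 \<union> set P3. far E x y)"
  shows "B_wins_A V E 3 (\<lambda>_. None)"
proof (rule BA_move)
  show "\<not> all_colored V (\<lambda>_. None)" using Vne by (auto simp: all_colored_def)
  fix c1 assume "legal_move V E 3 (\<lambda>_. None) c1"
  then obtain x i where x: "x \<in> V" "c1 = (\<lambda>_. None)(x := Some i)"
    unfolding legal_move_def by blast
  obtain v w P1 P2 P3 where gt: "good_theta V E v w P1 P2 P3"
    and far: "\<forall>y \<in> set P1 \<union> set P2 \<union> set P3. far E x y" using H x(1) by blast
  interpret th V E v w P1 P2 P3 using sg cub gt by unfold_locales
  have farH: "\<forall>y\<in>VH. far E x y" using far by (simp add: VH_def)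
  have m: "P1 \<in> {P1,P2,P3}" "P2 \<in> {P1,P2,P3}" by auto
  have vw1: "v \<in> set P1" "w \<in> set P1" using pth[OF m(1)] pidx(1)[OF m(1)] hd_in_set last_in_set by metis+
  then have vwH: "v \<in> VH" "w \<in> VH" by (simp_all add: VH_def)
  have vV: "v \<in> V" "w \<in> V" using vw1 pidx(3)[OF m(1)] by auto
  have fx: "\<And>y. y \<in> VH \<Longrightarrow> x \<noteq> y \<and> \<not> E x y \<and> \<not> E y x"
    using farH symE unfolding far_def close_def by metis
  have xv: "x \<noteq> v" "\<not> E v x" "x \<noteq> w" "\<not> E w x" using fx[OF vwH(1)] fx[OF vwH(2)] by auto
  define c2 where "c2 = c1(v := Some 1)"
  have lm1: "legal_move V E 3 c1 c2" unfolding legal_move_def c2_def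
    using vV xv x by (intro exI[of _ v] exI[of _ 1]) auto
  have "B_wins_A V E 3 c2"
  proof (rule BA_move)
    show "\<not> all_colored V c2" unfolding all_colored_def c2_def using vV xv x vw by auto
    fix c3 assume "legal_move V E 3 c2 c3"
    then obtain y1 j where y1: "y1 \<in> V" "c2 y1 = None" "j \<in> {1..3::nat}" "c3 = c2(y1 := Some j)"
      "\<forall>u. E y1 u \<longrightarrow> c2 u \<noteq> Some j"
      unfolding legal_move_def by blast
    have y1n: "y1 \<noteq> x" "y1 \<noteq> v" using y1(2) x by (auto simp: c2_def split: if_splits)
    show "B_wins_B V E 3 c3"
    proof (cases "y1 = w")
      case True
      show ?thesis
      proof (rule fin[OF farH, of c3 1 j y1 y1])
        show "c3 v = Some 1" using y1 y1n by (simp add: c2_def)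
        show "c3 w = Some j" using y1 True by simp
        show "(1::nat) \<in> {1..3}" "j \<in> {1..3}" using y1 by auto
        fix t assume "c3 t \<noteq> None"
        then show "t = x \<or> t = v \<or> t = w \<or> t = y1 \<or> t = y1" using y1 x by (auto simp: c2_def split: if_splits)
      qed
    next
      case False
      define \<kappa> :: nat where "\<kappa> = (if j = 2 then 3 else 2)"
      have ka: "\<kappa> \<in> {1..3}" "\<kappa> \<noteq> 1" "\<kappa> \<noteq> j" by (auto simp: \<kappa>_def)
      define c4 where "c4 = c3(w := Some \<kappa>)"
      have lm2: "legal_move V E 3 c3 c4" unfolding legal_move_def c4_def
      proof (intro exI[of _ w] exI[of _ \<kappa>] conjI allI impI)
        show "c3 w = None" using y1 False xv vw by (simp add: c2_def x)
        fix u assume "E w u"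
        then show "c3 u \<noteq> Some \<kappa>" using y1 xv ka x by (auto simp: c2_def)
      qed (use vV ka in auto)
      have "B_wins_A V E 3 c4"
      proof (rule BA_move)
        have l1: "0 < (1::nat)" "1 < length P1 - 1" "1 < length P2 - 1" using len4[OF m(1)] len4[OF m(2)] by auto
        have a12: "P1!1 \<noteq> P2!1"
        proof
          assume e: "P1!1 = P2!1"
          have "P1!1 \<in> set P1" "P2!1 \<in> set P2" using l1 by (simp_all add: nth_mem)
          then have "P1!1 \<in> {v,w}" using e ints(1) by auto
          then show False using int_nvw[OF m(1) l1(1,2)] by simp
        qed
        have aH: "P1!1 \<in> VH" "P2!1 \<in> VH" using l1 by (auto simp: VH_def nth_mem)
        have aV: "P1!1 \<in> V" "P2!1 \<in> V" using l1 pidx(3)[OF m(1)] pidx(3)[OF m(2)] by (auto simp: nth_mem subsetD)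
        have "c4 (P1!1) = None \<or> c4 (P2!1) = None"
          using a12 fx[OF aH(1)] fx[OF aH(2)] int_nvw[OF m(1) l1(1,2)] int_nvw[OF m(2) l1(1,3)] x y1
          by (auto simp: c4_def c2_def)
        then show "\<not> all_colored V c4" unfolding all_colored_def using aV by auto
        fix c5 assume "legal_move V E 3 c4 c5"
        then obtain y2 l where y2: "y2 \<in> V" "c4 y2 = None" "c5 = c4(y2 := Some l)"
          unfolding legal_move_def by blast
        show "B_wins_B V E 3 c5"
        proof (rule fin[OF farH, of c5 1 \<kappa> y1 y2])
          show "c5 v = Some 1" using y1 y1n y2 xv vw by (auto simp: c2_def c4_def)
          show "c5 w = Some \<kappa>" using y2 by (auto simp: c4_def)
          show "(1::nat) \<in> {1..3}" "\<kappa> \<in> {1..3}" using ka by auto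
          fix t assume "c5 t \<noteq> None"
          then show "t = x \<or> t = v \<or> t = w \<or> t = y1 \<or> t = y2" using y1 y2 x
            by (auto simp: c2_def c4_def split: if_splits)
        qed
      qed
      then show ?thesis by (rule BB_move[OF lm2])
    qed
  qed
  then show "B_wins_B V E 3 c1" by (rule BB_move[OF lm1])
qed

theorem mainTheorem12:
  fixes V :: "'a set" and E :: "'a \<Rightarrow> 'a \<Rightarrow> bool"
  assumes "simple_graph V E" and "cubic V E" and "V \<noteq> {}"
    and "\<forall>x\<in>V. \<exists>v w P1 P2 P3. good_theta V E v w P1 P2 P3
            \<and> (\<forall>y \<in> set P1 \<union> set P2 \<union> set P3. far E x y)"
  shows "B_wins_A V E 3 (\<lambda>_. None) \<and> game_chromatic_number V E = 4"
proof
  show b3: "B_wins_A V E 3 (\<lambda>_. None)" by (rule B3[OF assms])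
  have a4: "A_wins_A V E 4 (\<lambda>_. None)" using A4[OF assms(1,2)] by blast
  have lt: "\<And>k. k < 4 \<Longrightarrow> \<not> A_wins_A V E k (\<lambda>_. None)"
  proof -
    fix k :: nat assume "k < 4"
    then have "k = 0 \<or> k = 1 \<or> k = 2 \<or> k = 3" by auto
    then have "B_wins_A V E k (\<lambda>_. None)"
      using B0[OF assms(3)] B1[OF assms(1-3)] B2[OF assms(1-3)] b3 by auto
    then show "\<not> A_wins_A V E k (\<lambda>_. None)" using excl(1) by blast
  qed
  show "game_chromatic_number V E = 4" unfolding game_chromatic_number_def
  proof (rule Least_equality)
    show "A_wins_A V E 4 (\<lambda>_. None)" by (rule a4)
    fix y assume "A_wins_A V E y (\<lambda>_. None)"
    then show "4 \<le> y" using lt by (meson not_le)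
  qed
qed

end
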